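(* Let $\mathbb{K}$ be a field of characteristic not $2$, $p\geq 1$, $\lambda,\mu\in\mathbb{K}$, and $f:M_{1,p}(\mathbb{K})\to\mathbb{K}$, $g:M_{p,1}(\mathbb{K})\to\mathbb{K}$ linear forms. Suppose that for every $L\in M_{1,p}(\mathbb{K})$ and $C\in M_{p,1}(\mathbb{K})$, the matrix $$M_{L,C}=\begin{bmatrix}0&L&0\\ \mu C&0_{p\times p}&C\\ f(L)+g(C)&\lambda L&0\end{bmatrix}\in M_{p+2}(\mathbb{K})$$ has at most two distinct eigenvalues in $\overline{\mathbb{K}}$. Then $\lambda+\mu=0$. If moreover $\mathbb{K}$ has characteristic not $3$, then also $f=0$ and $g=0$.
   Context: $\overline{\mathbb{K}}$ is an algebraic closure of $\mathbb{K}$. *)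

theory Defs
  imports "HOL-Algebra.Algebraic_Closure_Type" "Jordan_Normal_Form.Char_Poly"
begin

definition linear_form_mat :: "nat \<Rightarrow> nat \<Rightarrow> ('a::field mat \<Rightarrow> 'a) \<Rightarrow> bool" where
  "linear_form_mat r s h \<longleftrightarrow>
     (\<forall>A\<in>carrier_mat r s. \<forall>B\<in>carrier_mat r s. h (A + B) = h A + h B) \<and>
     (\<forall>c. \<forall>A\<in>carrier_mat r s. h (c \<cdot>\<^sub>m A) = c * h A)"

text \<open>The (p+2) x (p+2) block matrix
  [[0, L, 0], [mu C, 0_{p x p}, C], [f L + g C, lambda L, 0]],
  with L a 1 x p row and C a p x 1 column; indices 0 .. p+1.\<close>
definition MLC :: "'a::field \<Rightarrow> 'a \<Rightarrow> ('a mat \<Rightarrow> 'a) \<Rightarrow> ('a mat \<Rightarrow> 'a) \<Rightarrow> nat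
    \<Rightarrow> 'a mat \<Rightarrow> 'a mat \<Rightarrow> 'a mat" where
  "MLC lam mu f g p L C = mat (p + 2) (p + 2) (\<lambda>(i, j).
     if i = 0 then (if 1 \<le> j \<and> j \<le> p then L $$ (0, j - 1) else 0)
     else if i \<le> p then
       (if j = 0 then mu * C $$ (i - 1, 0) else if j = p + 1 then C $$ (i - 1, 0) else 0)
     else (if j = 0 then f L + g C else if j \<le> p then lam * L $$ (0, j - 1) else 0))"

definition eigenvalues_ac :: "'a::field mat \<Rightarrow> 'a alg_closure set" where
  "eigenvalues_ac A = {k. eigenvalue (map_mat to_ac A) k}"

end

theory Submission
  imports Defs
begin

lemma cubic_roots:
  fixes P Q :: "'b::alg_closed_field"
  assumes "4*P^3 + 27*Q^2 \<noteq> 0"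
  shows "\<exists>r1 r2 r3. r1 \<noteq> r2 \<and> r1 \<noteq> r3 \<and> r2 \<noteq> r3 \<and>
     r1^3 + P*r1 + Q = 0 \<and> r2^3 + P*r2 + Q = 0 \<and> r3^3 + P*r3 + Q = 0"
proof -
  have "degree [:Q, P, 0, 1:] > 0" by simp
  then obtain r1 where h1: "poly [:Q, P, 0, 1:] r1 = 0" using alg_closed_imp_poly_has_root by blast
  hence e1: "r1^3 + P*r1 + Q = 0" by (simp add: algebra_simps power3_eq_cube)
  have "degree [:r1^2+P, r1, 1:] > 0" by simp
  then obtain r2 where h2: "poly [:r1^2+P, r1, 1:] r2 = 0" using alg_closed_imp_poly_has_root by blast
  hence e2: "r2^2 + r1*r2 + r1^2 + P = 0" by (simp add: algebra_simps power2_eq_square)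
  have Pe: "P = -(r1^2 + r1*r2 + r2^2)" using e2 by (simp add: algebra_simps eq_neg_iff_add_eq_0)
  have Qe: "Q = r1*r2*(r1+r2)" using e1 unfolding Pe
    by (simp add: algebra_simps power2_eq_square power3_eq_cube eq_neg_iff_add_eq_0 add_eq_0_iff2)
  have disc: "4*P^3 + 27*Q^2 = - (((r1-r2)*(2*r1+r2)*(r1+2*r2))^2)"
    unfolding Pe Qe by (simp add: algebra_simps power2_eq_square power3_eq_cube)
  have "(r1-r2)*(2*r1+r2)*(r1+2*r2) \<noteq> 0" using assms disc by auto
  hence d: "r1 \<noteq> r2" "r1 \<noteq> -r1-r2" "r2 \<noteq> -r1-r2" by auto
  show ?thesis
    apply (rule exI[of _ r1], rule exI[of _ r2], rule exI[of _ "-r1-r2"])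
    using d e1 unfolding Pe Qe by (simp add: algebra_simps power2_eq_square power3_eq_cube)
qed

lemma sum_split3: "(\<Sum>j\<in>{0..<p+2}. h j) = h 0 + (\<Sum>k<p. h (Suc k)) + h (p+1)"
proof -
  have "{0..<p+2} = {..<Suc (Suc p)}" by auto
  hence "(\<Sum>j\<in>{0..<p+2}. h j) = (\<Sum>j<Suc (Suc p). h j)" by simp
  also have "\<dots> = (\<Sum>j<Suc p. h j) + h (Suc p)" by simp
  also have "(\<Sum>j<Suc p. h j) = h 0 + (\<Sum>k<p. h (Suc k))" by (rule sum.lessThan_Suc_shift)
  finally show ?thesis by simp
qed

lemma eig:
  fixes t :: "'a::field alg_closure"
  assumes L: "L \<in> carrier_mat 1 p" and C: "C \<in> carrier_mat p 1"
    and l: "l = (\<Sum>k<p. L$$(0,k) * C$$(k,0))" and l0: "l \<noteq> 0"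
    and root: "t^3 - to_ac (l*(lam+mu)) * t - to_ac (l*(f L + g C)) = 0"
  shows "eigenvalue (map_mat to_ac (MLC lam mu f g p L C)) t"
proof -
  define M where "M = map_mat to_ac (MLC lam mu f g p L C)"
  define v where "v = vec (p+2) (\<lambda>i. if i=0 then to_ac l else if i \<le> p then t * to_ac (C$$(i-1,0)) else t^2 - to_ac(mu*l))"
  have dimM: "dim_row M = p+2" "dim_col M = p+2" unfolding M_def MLC_def by auto
  have v: "v \<in> carrier_vec (p+2)" unfolding v_def by auto
  have v0: "v \<noteq> 0\<^sub>v (p+2)"
  proof
    assume "v = 0\<^sub>v (p+2)"
    hence "v $ 0 = 0" by simp
    thus False using l0 unfolding v_def by simp
  qed
  have lsum: "(\<Sum>k<p. to_ac (L$$(0,k)) * (t * to_ac (C$$(k,0)))) = t * to_ac l"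
    unfolding l to_ac_sum sum_distrib_left by (simp add: algebra_simps)
  have "M *\<^sub>v v = t \<cdot>\<^sub>v v"
  proof (rule eq_vecI)
    show "dim_vec (M *\<^sub>v v) = dim_vec (t \<cdot>\<^sub>v v)" using dimM v by simp
    fix i assume "i < dim_vec (t \<cdot>\<^sub>v v)"
    hence i: "i < p+2" using v by simp
    have e: "(M *\<^sub>v v) $ i = (\<Sum>j\<in>{0..<p+2}. M$$(i,j) * v$j)"
      using i dimM v by (simp add: mult_mat_vec_def scalar_prod_def)
    show "(M *\<^sub>v v) $ i = (t \<cdot>\<^sub>v v) $ i"
    proof (cases "i = 0")
      case True
      have "(M *\<^sub>v v) $ i = (\<Sum>k<p. to_ac (L$$(0,k)) * (t * to_ac (C$$(k,0))))"
        unfolding e sum_split3 using True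
        by (auto simp: M_def MLC_def v_def intro!: sum.cong)
      then show ?thesis using lsum True v unfolding v_def by (simp add: algebra_simps)
    next
      case False
      show ?thesis
      proof (cases "i \<le> p")
        case True
        have "(M *\<^sub>v v) $ i = to_ac (mu * C$$(i-1,0)) * to_ac l + to_ac (C$$(i-1,0)) * (t^2 - to_ac(mu*l))"
          unfolding e sum_split3 using True False
          by (auto simp: M_def MLC_def v_def)
        then show ?thesis using True False i unfolding v_def by (simp add: algebra_simps power2_eq_square)
      next
        case F2: False
        hence ip: "i = p+1" using i by simp
        have "(M *\<^sub>v v) $ i = to_ac (f L + g C) * to_ac l + (\<Sum>k<p. to_ac (lam * L$$(0,k)) * (t * to_ac (C$$(k,0))))"
          unfolding e sum_split3 using ip
          by (auto simp: M_def MLC_def v_def intro!: sum.cong)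
        also have "(\<Sum>k<p. to_ac (lam * L$$(0,k)) * (t * to_ac (C$$(k,0)))) = to_ac lam * (t * to_ac l)"
          unfolding lsum[symmetric] sum_distrib_left by (simp add: algebra_simps)
        finally show ?thesis using ip root v unfolding v_def
          by (simp add: algebra_simps power2_eq_square power3_eq_cube)
      qed
    qed
  qed
  hence "eigenvector M v t" unfolding eigenvector_def using v v0 dimM by simp
  thus ?thesis unfolding M_def eigenvalue_def by blast
qed


definition eL :: "nat \<Rightarrow> nat \<Rightarrow> 'a::field mat" where
  "eL p j = mat 1 p (\<lambda>(i,k). if k = j then 1 else 0)"
definition eC :: "nat \<Rightarrow> nat \<Rightarrow> 'a::field mat" where
  "eC p j = mat p 1 (\<lambda>(k,i). if k = j then 1 else 0)"

lemma eL_carrier: "eL p j \<in> carrier_mat 1 p" unfolding eL_def by auto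
lemma eC_carrier: "eC p j \<in> carrier_mat p 1" unfolding eC_def by auto

lemma lunitC:
  assumes "L \<in> carrier_mat 1 p" "j < p"
  shows "(\<Sum>k<p. L$$(0,k) * (y \<cdot>\<^sub>m eC p j)$$(k,0)) = y * L$$(0,j)"
proof -
  have "(\<Sum>k<p. L$$(0,k) * (y \<cdot>\<^sub>m eC p j)$$(k,0)) = (\<Sum>k<p. if k = j then y * L$$(0,j) else 0)"
    by (rule sum.cong) (auto simp: eC_def)
  also have "\<dots> = y * L$$(0,j)" using assms by simp
  finally show ?thesis .
qed

lemma lunitL:
  assumes "C \<in> carrier_mat p 1" "j < p"
  shows "(\<Sum>k<p. (x \<cdot>\<^sub>m eL p j)$$(0,k) * C$$(k,0)) = x * C$$(j,0)"
proof -
  have "(\<Sum>k<p. (x \<cdot>\<^sub>m eL p j)$$(0,k) * C$$(k,0)) = (\<Sum>k<p. if k = j then x * C$$(j,0) else 0)"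
    by (rule sum.cong) (auto simp: eL_def)
  also have "\<dots> = x * C$$(j,0)" using assms by simp
  finally show ?thesis .
qed

lemma key:
  fixes lam mu :: "'a::field"
  assumes hyp: "\<forall>L\<in>carrier_mat 1 p. \<forall>C\<in>carrier_mat p 1.
           finite (eigenvalues_ac (MLC lam mu f g p L C)) \<and>
           card (eigenvalues_ac (MLC lam mu f g p L C)) \<le> 2"
    and L: "L \<in> carrier_mat 1 p" and C: "C \<in> carrier_mat p 1"
    and l: "l = (\<Sum>k<p. L$$(0,k) * C$$(k,0))" and l0: "l \<noteq> 0"
  shows "4*l*(lam+mu)^3 = 27*(f L + g C)^2"
proof (rule ccontr)
  assume ne: "4*l*(lam+mu)^3 \<noteq> 27*(f L + g C)^2"
  define P where "P = to_ac (-(l*(lam+mu)))"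
  define Q where "Q = to_ac (-(l*(f L + g C)))"
  have "4*P^3 + 27*Q^2 = to_ac (l^2 * (27*(f L + g C)^2 - 4*l*(lam+mu)^3))"
    unfolding P_def Q_def by (simp add: algebra_simps power2_eq_square power3_eq_cube)
  also have "\<dots> \<noteq> 0" unfolding to_ac_eq_0_iff using ne l0 by simp
  finally obtain r1 r2 r3 where r: "r1 \<noteq> r2" "r1 \<noteq> r3" "r2 \<noteq> r3"
     "r1^3 + P*r1 + Q = 0" "r2^3 + P*r2 + Q = 0" "r3^3 + P*r3 + Q = 0"
    using cubic_roots by blast
  have ev: "eigenvalue (map_mat to_ac (MLC lam mu f g p L C)) t" if "t^3 + P*t + Q = 0" for t
    by (rule eig[OF L C l l0]) (use that in \<open>simp add: P_def Q_def algebra_simps\<close>)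
  have sub: "{r1,r2,r3} \<subseteq> eigenvalues_ac (MLC lam mu f g p L C)"
    using ev r unfolding eigenvalues_ac_def by auto
  have fin: "finite (eigenvalues_ac (MLC lam mu f g p L C))" and c2: "card (eigenvalues_ac (MLC lam mu f g p L C)) \<le> 2"
    using hyp L C by auto
  have "card {r1,r2,r3} = 3" using r by auto
  with card_mono[OF fin sub] c2 show False by simp
qed

lemma two_ne: assumes "CHAR('a::field) \<noteq> 2" shows "(2::'a) \<noteq> 0"
proof
  assume "(2::'a) = 0"
  hence "of_nat 2 = (0::'a)" by simp
  hence d: "CHAR('a) dvd 2" by (simp only: of_nat_eq_0_iff_char_dvd)
  have "CHAR('a) \<noteq> 1"
  proof
    assume "CHAR('a) = 1"
    hence "of_nat 1 = (0::'a)" by (metis of_nat_CHAR)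
    thus False by simp
  qed
  moreover have "CHAR('a) \<le> 2" using dvd_imp_le[OF d] by simp
  moreover have "CHAR('a) \<noteq> 0"
  proof
    assume "CHAR('a) = 0" with d show False by simp
  qed
  ultimately show False using assms by linarith
qed

lemma three_ne: assumes "CHAR('a::field) \<noteq> 3" shows "(3::'a) \<noteq> 0"
proof
  assume "(3::'a) = 0"
  hence "of_nat 3 = (0::'a)" by simp
  hence d: "CHAR('a) dvd 3" by (simp only: of_nat_eq_0_iff_char_dvd)
  have "CHAR('a) \<noteq> 1"
  proof
    assume "CHAR('a) = 1"
    hence "of_nat 1 = (0::'a)" by (metis of_nat_CHAR)
    thus False by simp
  qed
  moreover have "CHAR('a) \<noteq> 2"
  proof
    assume "CHAR('a) = 2" with d show False by simp
  qed
  moreover have "CHAR('a) \<le> 3" using dvd_imp_le[OF d] by simp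
  moreover have "CHAR('a) \<noteq> 0"
  proof
    assume "CHAR('a) = 0" with d show False by simp
  qed
  ultimately show False using assms by linarith
qed

lemma three_eq: assumes "CHAR('a::field) = 3" shows "(3::'a) = 0"
  using of_nat_CHAR[where 'a='a] assms by simp

theorem mainTheorem16:
  fixes lam mu :: "'a::field" and f g :: "'a mat \<Rightarrow> 'a" and p :: nat
  assumes "CHAR('a) \<noteq> 2"
    and "p \<ge> 1"
    and "linear_form_mat 1 p f"
    and "linear_form_mat p 1 g"
    and "\<forall>L\<in>carrier_mat 1 p. \<forall>C\<in>carrier_mat p 1.
           finite (eigenvalues_ac (MLC lam mu f g p L C)) \<and>
           card (eigenvalues_ac (MLC lam mu f g p L C)) \<le> 2"
  shows "lam + mu = 0 \<and>
         (CHAR('a) \<noteq> 3 \<longrightarrow> (\<forall>L\<in>carrier_mat 1 p. f L = 0) \<and> (\<forall>C\<in>carrier_mat p 1. g C = 0))"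
proof -
  note hyp = assms(5)
  have p0: "0 < p" using assms(2) by simp
  have fl: "f (c \<cdot>\<^sub>m A) = c * f A" if "A \<in> carrier_mat 1 p" for c A
    using assms(3) that unfolding linear_form_mat_def by blast
  have gl: "g (c \<cdot>\<^sub>m A) = c * g A" if "A \<in> carrier_mat p 1" for c A
    using assms(4) that unfolding linear_form_mat_def by blast
  define s where "s = lam + mu"
  define \<alpha> where "\<alpha> = f (eL p 0)"
  define \<beta> where "\<beta> = g (eC p 0)"
  have two: "(2::'a) \<noteq> 0" using two_ne assms(1) by blast
  have xy: "4*(x*y)*s^3 = 27*(x*\<alpha> + y*\<beta>)^2" if "x \<noteq> 0" "y \<noteq> 0" for x y
  proof -
    have Lc: "x \<cdot>\<^sub>m eL p 0 \<in> carrier_mat 1 p" by (rule smult_carrier_mat[OF eL_carrier])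
    have Cc: "y \<cdot>\<^sub>m eC p 0 \<in> carrier_mat p 1" by (rule smult_carrier_mat[OF eC_carrier])
    have l: "(\<Sum>k<p. (x \<cdot>\<^sub>m eL p 0)$$(0,k) * (y \<cdot>\<^sub>m eC p 0)$$(k,0)) = x*y"
      using lunitC[OF Lc p0, of y] p0 by (simp add: eL_def)
    have "4*(x*y)*(lam+mu)^3 = 27*(f (x \<cdot>\<^sub>m eL p 0) + g (y \<cdot>\<^sub>m eC p 0))^2"
      by (rule key[OF hyp Lc Cc l[symmetric]]) (use that in simp)
    thus ?thesis using fl[OF eL_carrier] gl[OF eC_carrier] unfolding s_def \<alpha>_def \<beta>_def by simp
  qed
  have h11: "4*s^3 = 27*(\<alpha>+\<beta>)^2" using xy[of 1 1] by simp
  have h21: "8*s^3 = 27*(2*\<alpha>+\<beta>)^2" using xy[of 2 1] two by simp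
  have h12: "8*s^3 = 27*(\<alpha>+2*\<beta>)^2" using xy[of 1 2] two by simp
  have four: "(4::'a) \<noteq> 0" proof - have h: "(4::'a) = 2*2" by simp show ?thesis using h two by (metis mult_eq_0_iff) qed
  have s0: "s = 0"
  proof (cases "CHAR('a) = 3")
    case True
    hence "(27::'a) = 0" proof - have h: "(27::'a) = 3*9" by simp show ?thesis using h three_eq[OF True] by (metis mult_zero_left) qed
    hence "4*s^3 = 0" using h11 by simp
    thus ?thesis using four by simp
  next
    case False
    have three: "(3::'a) \<noteq> 0" using three_ne False by blast
    have t27: "(27::'a) \<noteq> 0" using three
      proof - have h: "(27::'a) = 3*3*3" by simp show ?thesis using h three by (metis mult_eq_0_iff) qed
    have "27*(2*\<alpha>^2-\<beta>^2) = 27*(2*\<alpha>+\<beta>)^2 - 2*(27*(\<alpha>+\<beta>)^2)"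
      by (simp add: algebra_simps power2_eq_square)
    also have "\<dots> = 8*s^3 - 2*(4*s^3)" by (simp only: h11 h21)
    also have "\<dots> = 0" by simp
    finally have z1: "2*\<alpha>^2-\<beta>^2 = 0" using t27 by (metis mult_eq_0_iff)
    hence a1: "\<beta>^2 = 2*\<alpha>^2" by simp
    have "27*(2*\<beta>^2-\<alpha>^2) = 27*(\<alpha>+2*\<beta>)^2 - 2*(27*(\<alpha>+\<beta>)^2)"
      by (simp add: algebra_simps power2_eq_square)
    also have "\<dots> = 8*s^3 - 2*(4*s^3)" by (simp only: h11 h12)
    also have "\<dots> = 0" by simp
    finally have z2: "2*\<beta>^2-\<alpha>^2 = 0" using t27 by (metis mult_eq_0_iff)
    hence a2: "\<alpha>^2 = 2*\<beta>^2" by simp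
    have "3*\<beta>^2 = (2*\<alpha>^2-\<beta>^2) + 2*(2*\<beta>^2-\<alpha>^2)" by (simp add: algebra_simps)
    hence "3*\<beta>^2 = 0" unfolding z1 z2 by simp
    hence b0: "\<beta> = 0" using three by simp
    hence "\<alpha> = 0" using a2 by simp
    hence "4*s^3 = 0" using h11 b0 by simp
    thus ?thesis using four by simp
  qed
  have rest: "(\<forall>L\<in>carrier_mat 1 p. f L = 0) \<and> (\<forall>C\<in>carrier_mat p 1. g C = 0)" if c3: "CHAR('a) \<noteq> 3"
  proof -
    have three: "(3::'a) \<noteq> 0" using three_ne c3 by blast
    have t27: "(27::'a) \<noteq> 0" using three
      proof - have h: "(27::'a) = 3*3*3" by simp show ?thesis using h three by (metis mult_eq_0_iff) qed
    have a0: "f L + g C = 0" if "L \<in> carrier_mat 1 p" "C \<in> carrier_mat p 1"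
        "(\<Sum>k<p. L$$(0,k) * C$$(k,0)) \<noteq> 0" for L C
    proof -
      have "4*(\<Sum>k<p. L$$(0,k) * C$$(k,0))*(lam+mu)^3 = 27*(f L + g C)^2"
        by (rule key[OF hyp that(1,2) refl that(3)])
      hence "27*(f L + g C)^2 = 0" using s0 unfolding s_def by simp
      thus ?thesis using t27 by simp
    qed
    have fz: "f L = 0" if L: "L \<in> carrier_mat 1 p" for L
    proof (cases "\<exists>j<p. L$$(0,j) \<noteq> 0")
      case True
      then obtain j where j: "j < p" "L$$(0,j) \<noteq> 0" by blast
      have hy: "f L + y * g (eC p j) = 0" if "y \<noteq> 0" for y
      proof -
        have Cc: "y \<cdot>\<^sub>m eC p j \<in> carrier_mat p 1" by (rule smult_carrier_mat[OF eC_carrier])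
        have "(\<Sum>k<p. L$$(0,k) * (y \<cdot>\<^sub>m eC p j)$$(k,0)) \<noteq> 0"
          unfolding lunitC[OF L j(1)] using j that by simp
        hence "f L + g (y \<cdot>\<^sub>m eC p j) = 0" by (rule a0[OF L Cc])
        thus ?thesis using gl[OF eC_carrier] by simp
      qed
      have e1: "f L + g (eC p j) = 0" using hy[of 1] by simp
      have e2: "f L + 2 * g (eC p j) = 0" using hy[of 2] two by simp
      have "g (eC p j) = (f L + 2 * g (eC p j)) - (f L + g (eC p j))" by (simp add: algebra_simps)
      hence "g (eC p j) = 0" using e1 e2 by simp
      thus ?thesis using e1 by simp
    next
      case False
      have "L = 0 \<cdot>\<^sub>m L"
        by (rule eq_matI) (use L False in auto)
      hence "f L = f (0 \<cdot>\<^sub>m L)" by simp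
      also have "\<dots> = 0" using fl[OF L] by simp
      finally have "f L = 0" .
      thus ?thesis by simp
    qed
    have gz: "g C = 0" if C: "C \<in> carrier_mat p 1" for C
    proof (cases "\<exists>j<p. C$$(j,0) \<noteq> 0")
      case True
      then obtain j where j: "j < p" "C$$(j,0) \<noteq> 0" by blast
      have hy: "x * f (eL p j) + g C = 0" if "x \<noteq> 0" for x
      proof -
        have Lc: "x \<cdot>\<^sub>m eL p j \<in> carrier_mat 1 p" by (rule smult_carrier_mat[OF eL_carrier])
        have "(\<Sum>k<p. (x \<cdot>\<^sub>m eL p j)$$(0,k) * C$$(k,0)) \<noteq> 0"
          unfolding lunitL[OF C j(1)] using j that by simp
        hence "f (x \<cdot>\<^sub>m eL p j) + g C = 0" by (rule a0[OF Lc C])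
        thus ?thesis using fl[OF eL_carrier] by simp
      qed
      have e1: "f (eL p j) + g C = 0" using hy[of 1] by simp
      have e2: "2 * f (eL p j) + g C = 0" using hy[of 2] two by simp
      have "f (eL p j) = (2 * f (eL p j) + g C) - (f (eL p j) + g C)" by (simp add: algebra_simps)
      hence "f (eL p j) = 0" using e1 e2 by simp
      thus ?thesis using e1 by simp
    next
      case False
      have "C = 0 \<cdot>\<^sub>m C"
        by (rule eq_matI) (use C False in auto)
      hence "g C = g (0 \<cdot>\<^sub>m C)" by simp
      also have "\<dots> = 0" using gl[OF C] by simp
      finally have "g C = 0" .
      thus ?thesis by simp
    qed
    show ?thesis using fz gz by blast
  qed
  show ?thesis using s0 rest unfolding s_def by blast
qed

end
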